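(* Let $A\subseteq\mathbb{N}$ be a set whose natural density $\mathrm{dens}(A)$ exists and is positive, and let $m,\gamma$ be integers with $2\le\gamma<m$. Then for every $k\ge 1$, \[ \underline{\mathrm{dens}}\Big(A\cap \bigcup_{n\in R_k}\big([m^n,\gamma m^n]\cap\mathbb{N}\big)\Big)>0, \] where $R_k=\{2^{k-1}(2j+1): j\in\mathbb{N}_0\}$.
   Context: $\mathbb{N}=\{1,2,\dots\}$, $\mathbb{N}_0=\mathbb{N}\cup\{0\}$. For $A\subseteq\mathbb{N}$, $\underline{\mathrm{dens}}(A)=\liminf_{n\to\infty}\#(A\cap[1,n])/n$ and $\mathrm{dens}(A)=\lim_{n\to\infty}\#(A\cap[1,n])/n$ when this limit exists. Equivalently, $R_k=\{n\in\mathbb{N}: v_2(n)+1=k\}$ where $v_2$ is the $2$-adic valuation. *)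

theory Defs
  imports "HOL-Analysis.Analysis"
begin

definition count_ratio :: "nat set \<Rightarrow> nat \<Rightarrow> real" where
  "count_ratio A n = real (card (A \<inter> {1..n})) / real n"

definition lower_dens :: "nat set \<Rightarrow> ereal" where
  "lower_dens A = liminf (\<lambda>n. ereal (count_ratio A n))"

definition has_dens :: "nat set \<Rightarrow> real \<Rightarrow> bool" where
  "has_dens A d \<longleftrightarrow> (count_ratio A \<longlongrightarrow> d) sequentially"

definition R :: "nat \<Rightarrow> nat set" where
  "R k = {2 ^ (k - 1) * (2 * j + 1) | j. True}"

end

theory Submission
  imports Defs
begin

lemma nat_lt_pow: "(2::nat) \<le> m \<Longrightarrow> n < m ^ n"
proof -
  assume "2 \<le> m"
  have "n < 2 ^ n" by (rule less_exp)
  also have "(2::nat) ^ n \<le> m ^ n" using \<open>2 \<le> m\<close> by (rule power_mono) simp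
  finally show ?thesis .
qed

theorem lemma2p2:
  fixes A :: "nat set" and d :: real and m \<gamma> k :: nat
  assumes "A \<subseteq> {1..}"
    and "has_dens A d" and "d > 0"
    and "2 \<le> \<gamma>" and "\<gamma> < m"
    and "k \<ge> 1"
  shows "lower_dens (A \<inter> (\<Union>n\<in>R k. {m ^ n .. \<gamma> * m ^ n})) > 0"
proof -
  define B where "B = A \<inter> (\<Union>n\<in>R k. {m ^ n .. \<gamma> * m ^ n})"
  define T :: nat where "T = 2 ^ k"
  define n0 :: nat where "n0 = 2 ^ (k - 1)"
  define e :: real where "e = d / (2 * (real \<gamma> + 1))"
  define c :: real where "c = d / (2 * real \<gamma> * real m ^ T)"
  define cnt where "cnt = (\<lambda>x. real (card (A \<inter> {1..x})))"
  have m2: "m \<ge> 2" using assms by linarith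
  have e0: "e > 0" using assms unfolding e_def by auto
  have c0: "c > 0" using assms m2 unfolding c_def by auto
  have T1: "T \<ge> 1" unfolding T_def by simp
  have Tn0: "T = 2 * n0" unfolding T_def n0_def using assms(6)
    by (metis Suc_diff_le diff_Suc_1 power_Suc)
  have lim: "(count_ratio A \<longlongrightarrow> d) sequentially" using assms(2) unfolding has_dens_def .
  have "eventually (\<lambda>x. d - e < count_ratio A x) sequentially"
    using order_tendstoD(1)[OF lim] e0 by simp
  moreover have "eventually (\<lambda>x. count_ratio A x < d + e) sequentially"
    using order_tendstoD(2)[OF lim] e0 by simp
  ultimately have "eventually (\<lambda>x. d - e < count_ratio A x \<and> count_ratio A x < d + e) sequentially"
    by (rule eventually_conj)
  then obtain X0 where X0: "\<And>x. x \<ge> X0 \<Longrightarrow> d - e < count_ratio A x \<and> count_ratio A x < d + e"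
    unfolding eventually_sequentially by blast
  define X where "X = max X0 1"
  have Xb: "\<And>x. x \<ge> X \<Longrightarrow> (d - e) * real x \<le> cnt x \<and> cnt x \<le> (d + e) * real x"
  proof -
    fix x assume "x \<ge> X"
    then have "x \<ge> X0" "x \<ge> 1" unfolding X_def by auto
    then have "d - e < cnt x / real x" "cnt x / real x < d + e"
      using X0[of x] unfolding count_ratio_def cnt_def by auto
    then show "(d - e) * real x \<le> cnt x \<and> cnt x \<le> (d + e) * real x"
      using \<open>x \<ge> 1\<close> by (auto simp: field_simps)
  qed
  define N0 where "N0 = max (\<gamma> * m ^ n0) (X * \<gamma> * m ^ T)"
  have main: "c \<le> count_ratio B N" if N: "N \<ge> N0" for N
  proof -
    define J where "J = {j. \<gamma> * m ^ (n0 + T * j) \<le> N}"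
    have "J \<subseteq> {..N}"
    proof
      fix j assume "j \<in> J"
      have "j \<le> T * j" using T1 by simp
      also have "\<dots> \<le> n0 + T * j" by simp
      also have "\<dots> < m ^ (n0 + T * j)" using nat_lt_pow[OF m2] .
      also have "\<dots> \<le> \<gamma> * m ^ (n0 + T * j)" using assms(4) by simp
      also have "\<dots> \<le> N" using \<open>j \<in> J\<close> J_def by simp
      finally show "j \<in> {..N}" by simp
    qed
    then have fJ: "finite J" by (rule finite_subset) simp
    have "0 \<in> J" using N unfolding J_def N0_def by simp
    define j where "j = Max J"
    have jJ: "j \<in> J" unfolding j_def using fJ \<open>0 \<in> J\<close> by (intro Max_in) auto
    have "Suc j \<notin> J" using fJ unfolding j_def
      by (metis Max_ge Suc_n_not_le_n)
    define n where "n = n0 + T * j"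
    define M where "M = m ^ n"
    have M1: "M \<ge> 1" using m2 unfolding M_def by simp
    have hi: "\<gamma> * M \<le> N" using jJ unfolding J_def M_def n_def by simp
    have "N < \<gamma> * m ^ (n0 + T * Suc j)" using \<open>Suc j \<notin> J\<close> unfolding J_def by simp
    also have "m ^ (n0 + T * Suc j) = M * m ^ T" unfolding M_def n_def
      by (simp add: power_add algebra_simps)
    finally have lo: "N < \<gamma> * M * m ^ T" by simp
    have "X * (\<gamma> * m ^ T) \<le> N" using N unfolding N0_def by (simp add: mult.assoc)
    also have "\<dots> < M * (\<gamma> * m ^ T)" using lo by (simp add: algebra_simps)
    finally have "X < M" by (metis mult_less_cancel2)
    have nR: "n \<in> R k" unfolding R_def n_def n0_def Tn0
      by (rule CollectI, rule exI[of _ j]) (simp add: algebra_simps)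
    have sub: "A \<inter> {M..\<gamma> * M} \<subseteq> B \<inter> {1..N}"
      unfolding B_def M_def using nR hi M1 unfolding M_def by auto
    have "X \<le> \<gamma> * M"
    proof -
      have "M \<le> \<gamma> * M" using assms(4) by simp
      then show "X \<le> \<gamma> * M" using \<open>X < M\<close> by linarith
    qed
    have un: "A \<inter> {1..\<gamma> * M} \<subseteq> (A \<inter> {1..M}) \<union> (A \<inter> {M..\<gamma> * M})" by auto
    have "cnt (\<gamma> * M) \<le> cnt M + real (card (A \<inter> {M..\<gamma> * M}))"
    proof -
      have "card (A \<inter> {1..\<gamma> * M}) \<le> card ((A \<inter> {1..M}) \<union> (A \<inter> {M..\<gamma> * M}))"
        by (rule card_mono[OF _ un]) auto
      also have "\<dots> \<le> card (A \<inter> {1..M}) + card (A \<inter> {M..\<gamma> * M})" by (rule card_Un_le)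
      finally show ?thesis unfolding cnt_def by linarith
    qed
    moreover have "real (card (A \<inter> {M..\<gamma> * M})) \<le> real (card (B \<inter> {1..N}))"
      by (simp only: of_nat_le_iff, rule card_mono[OF _ sub]) auto
    moreover have "(d - e) * real (\<gamma> * M) \<le> cnt (\<gamma> * M)" using Xb \<open>X \<le> \<gamma> * M\<close> by blast
    moreover have "cnt M \<le> (d + e) * real M" using Xb[of M] \<open>X < M\<close> by simp
    moreover have "(d - e) * real (\<gamma> * M) = (d - e) * real \<gamma> * real M" by simp
    ultimately have key: "(d - e) * real \<gamma> * real M - (d + e) * real M \<le> real (card (B \<inter> {1..N}))"
      by linarith
    have eq1: "(d - e) * real \<gamma> - (d + e) = d * (real \<gamma> - 1) - e * (real \<gamma> + 1)"
      by (simp add: algebra_simps)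
    have eq2: "e * (real \<gamma> + 1) = d / 2" unfolding e_def by (simp add: field_simps)
    have "(d - e) * real \<gamma> - (d + e) \<ge> d / 2"
    proof -
      have "real \<gamma> - 1 \<ge> 1" using assms(4) by simp
      then have "d * 1 \<le> d * (real \<gamma> - 1)" using assms(3) by (intro mult_left_mono) auto
      then show ?thesis using eq1 eq2 by linarith
    qed
    then have "d / 2 * real M \<le> (d - e) * real \<gamma> * real M - (d + e) * real M"
    proof -
      have "(d - e) * real \<gamma> * real M - (d + e) * real M = ((d - e) * real \<gamma> - (d + e)) * real M"
        by (simp add: algebra_simps)
      moreover have "d / 2 * real M \<le> ((d - e) * real \<gamma> - (d + e)) * real M"
        using \<open>(d - e) * real \<gamma> - (d + e) \<ge> d / 2\<close> by (rule mult_right_mono) simp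
      ultimately show ?thesis by simp
    qed
    with key have K: "d / 2 * real M \<le> real (card (B \<inter> {1..N}))" by linarith
    have Npos: "real N > 0" using hi M1 assms(4) 
    proof -
      have "1 \<le> \<gamma> * M" using M1 assms(4) by (simp add: one_le_mult_iff)
      then have "1 \<le> N" using hi by (rule le_trans)
      then show ?thesis by simp
    qed
    have lo': "real N \<le> real \<gamma> * real M * real m ^ T" using lo
    proof -
      have "real N \<le> real (\<gamma> * M * m ^ T)" using lo by (simp only: of_nat_le_iff)
      then show ?thesis by simp
    qed
    have "c * real N \<le> c * (real \<gamma> * real M * real m ^ T)"
      using lo' c0 by simp
    also have "\<dots> = d / 2 * real M" unfolding c_def using assms m2 by (simp add: field_simps)
    finally have "c * real N \<le> real (card (B \<inter> {1..N}))" using K by linarith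
    then show ?thesis unfolding count_ratio_def using Npos by (simp add: field_simps)
  qed
  have "eventually (\<lambda>N. ereal c \<le> ereal (count_ratio B N)) sequentially"
    unfolding eventually_sequentially using main by auto
  then have "ereal c \<le> lower_dens B" unfolding lower_dens_def by (rule Liminf_bounded)
  then show ?thesis using c0 unfolding B_def by (meson ereal_less(2) less_le_trans)
qed

end
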